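(* Assume (A1), (A2), (A3). Then for all $x,v\in\mathbb R^d$ and every probability measure $\mu$ on $\mathbb R^d$ with finite first moment, \[H(x,v)\ge24U(x)+\lambda|x|^2+12\Big|v+\frac x2\Big|^2,\] \[\mathcal L_\mu H(x,v)\le B+L_W(6+8\lambda)\Big(\int|y|\,d\mu(y)\Big)^2-\Big(\frac34\lambda+\lambda^2\Big)|x|^2-\gamma H(x,v),\] \[\mathcal L_\mu H(x,v)\le B+\Big(\Big(\int|y|\,d\mu(y)\Big)^2-|x|^2\Big)\Big(\frac34\lambda+\lambda^2\Big)-\gamma H(x,v).\] In particular $H$ is non-negative and tends to $+\infty$ at infinity.
   Context: $U,W\in\mathcal C^1(\mathbb R^d)$. (A1): $U\ge0$ and there exist $\lambda>0$, $A\ge0$ with $\tfrac12\nabla U(x)\cdot x\ge\lambda(U(x)+|x|^2/4)-A$ for all $x$. (A2): $\nabla U$ is $L_U$-Lipschitz. (A3): $W$ even, $\nabla W$ is $L_W$-Lipschitz, $L_W<\lambda/8$. Fix $\tilde A\ge0$ with $U(x)\ge\frac\lambda6|x|^2-\tilde A$ for all $x$ (such a constant exists). Set $\gamma=\frac{\lambda}{2(\lambda+1)}$, $B=24(A+(\lambda-\gamma)\tilde A+d)$, and \[H(x,v)=24U(x)+(6(1-\gamma)+\lambda)|x|^2+12x\cdot v+12|v|^2.\] For $\mu$ with finite first moment, $\mathcal L_\mu\phi(x,v)=v\cdot\nabla_x\phi-(v+\nabla U(x)+\nabla W*\mu(x))\cdot\nabla_v\phi+\Delta_v\phi$, where $\nabla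 W*\mu(x)=\int\nabla W(x-y)\mu(dy)$. *)

theory Defs
  imports "HOL-Probability.Probability"
begin

definition grad :: "('a::euclidean_space \<Rightarrow> real) \<Rightarrow> 'a \<Rightarrow> 'a" where
  "grad f x = (\<Sum>i\<in>Basis. frechet_derivative f (at x) i *\<^sub>R i)"

definition grad_x :: "('a::euclidean_space \<Rightarrow> 'a \<Rightarrow> real) \<Rightarrow> 'a \<Rightarrow> 'a \<Rightarrow> 'a" where
  "grad_x phi x v = grad (\<lambda>y. phi y v) x"

definition grad_v :: "('a::euclidean_space \<Rightarrow> 'a \<Rightarrow> real) \<Rightarrow> 'a \<Rightarrow> 'a \<Rightarrow> 'a" where
  "grad_v phi x v = grad (\<lambda>w. phi x w) v"

definition lap_v :: "('a::euclidean_space \<Rightarrow> 'a \<Rightarrow> real) \<Rightarrow> 'a \<Rightarrow> 'a \<Rightarrow> real" where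
  "lap_v phi x v = (\<Sum>i\<in>Basis.
      frechet_derivative (\<lambda>w. frechet_derivative (\<lambda>u. phi x u) (at w) i) (at v) i)"

definition conv_grad :: "('a::euclidean_space \<Rightarrow> real) \<Rightarrow> 'a measure \<Rightarrow> 'a \<Rightarrow> 'a" where
  "conv_grad W \<mu> x = (\<integral>y. grad W (x - y) \<partial>\<mu>)"

definition Lgen :: "('a::euclidean_space \<Rightarrow> real) \<Rightarrow> ('a \<Rightarrow> real) \<Rightarrow> 'a measure
    \<Rightarrow> ('a \<Rightarrow> 'a \<Rightarrow> real) \<Rightarrow> 'a \<Rightarrow> 'a \<Rightarrow> real" where
  "Lgen U W \<mu> phi x v =
     v \<bullet> grad_x phi x v - (v + grad U x + conv_grad W \<mu> x) \<bullet> grad_v phi x v + lap_v phi x v"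

definition gam :: "real \<Rightarrow> real" where
  "gam lam = lam / (2 * (lam + 1))"

definition Bconst :: "real \<Rightarrow> real \<Rightarrow> real \<Rightarrow> nat \<Rightarrow> real" where
  "Bconst lam A At d = 24 * (A + (lam - gam lam) * At + real d)"

definition Hfun :: "('a::euclidean_space \<Rightarrow> real) \<Rightarrow> real \<Rightarrow> 'a \<Rightarrow> 'a \<Rightarrow> real" where
  "Hfun U lam x v = 24 * U x + (6 * (1 - gam lam) + lam) * (norm x)\<^sup>2 + 12 * (x \<bullet> v)
     + 12 * (norm v)\<^sup>2"

end

theory Submission
  imports Defs
begin

lemma aux1:
  fixes g a2 u lam b2 p :: real
  assumes "0 \<le> (3-6*g)*a2"
  shows "24*u + lam*a2 + 12*(b2 + p + a2/4) \<le> 24*u + (6*(1-g)+lam)*a2 + 12*p + 12*b2"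
  using assms by (simp add: algebra_simps)

lemma scalar_main:
  fixes lam L g a b m p k1 k2 GU U A At d H LH :: real
  assumes lam: "lam > 0" and L0: "0 \<le> L" and Ll: "L < lam/8"
   and gdef: "g = lam/(2*(lam+1))"
   and a: "a \<ge> 0" and b: "b \<ge> 0" and m: "m \<ge> 0"
   and p: "p \<le> a*b" and k1: "- k1 \<le> L*(a+m)*a" and k2: "- k2 \<le> L*(a+m)*b"
   and A1: "(1/2)*GU \<ge> lam*(U + a^2/4) - A"
   and Ub: "U \<ge> lam/6*a^2 - At"
   and Hdef: "H = 24*U + (6*(1-g)+lam)*a^2 + 12*p + 12*b^2"
   and LHdef: "LH = (2*(6*(1-g)+lam)-12)*p - 12*b^2 - 12*GU - 12*k1 - 24*k2 + 24*d"
  shows "LH \<le> 24*(A + (lam - g)*At + d) + L*(6+8*lam)*m^2 - (3/4*lam+lam^2)*a^2 - g*H"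
proof -
  have gid: "lam = 2*g*(lam+1)" using gdef lam by (simp add: field_simps)
  have g0: "g \<ge> 0" using gdef lam by simp
  have gl0: "g*lam \<ge> 0" using g0 lam by simp
  have "lam*(1-2*g) = 2*g" using gid by (simp add: algebra_simps)
  then have "lam*(1-2*g) \<ge> 0" using g0 by simp
  then have gh: "g \<le> 1/2" using lam by (simp add: zero_le_mult_iff)
  have "lam = 2*(g*lam) + 2*g" using gid by (simp add: algebra_simps)
  then have glam: "g \<le> lam" using g0 gl0 by linarith
  have ELH: "LH = 2*lam*p - 12*g*p - 12*b^2 - 12*GU - 12*k1 - 24*k2 + 24*d"
    unfolding LHdef by (simp add: algebra_simps)
  have EgH: "g*H = 24*g*U + 6*g*a^2 - 6*g*g*a^2 + g*lam*a^2 + 12*g*p + 12*g*b^2"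
    unfolding Hdef by (simp add: algebra_simps)
  have EG: "24*(A + (lam - g)*At + d) + L*(6+8*lam)*m^2 - (3/4*lam+lam^2)*a^2
     = 24*A + 24*lam*At - 24*g*At + 24*d + 6*L*m^2 + 8*lam*L*m^2 - 3/4*lam*a^2 - lam*lam*a^2"
    by (simp add: algebra_simps power2_eq_square)
  have s1: "-12*GU \<le> -24*lam*U - 6*lam*a^2 + 24*A" using A1 by (simp add: algebra_simps)
  have s2: "-24*lam*U + 24*g*U \<le> -4*lam*lam*a^2 + 4*g*lam*a^2 + 24*lam*At - 24*g*At"
  proof -
    have "(lam-g)*(lam/6*a^2 - At) \<le> (lam-g)*U" using glam Ub by (intro mult_left_mono) auto
    then show ?thesis by (simp add: field_simps power2_eq_square)
  qed
  have s3: "-12*k1 \<le> 18*L*a^2 + 6*L*m^2"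
  proof -
    have "0 \<le> L*(a-m)^2" using L0 by simp
    then show ?thesis using k1 by (simp add: algebra_simps power2_eq_square)
  qed
  have s4a: "24*L*b*m \<le> 8*lam*L*m^2 + 18*(L/lam)*b^2"
  proof -
    have "0 \<le> (L/lam)*(2*lam*m - 3*b)^2" using L0 lam by simp
    moreover have "(L/lam)*(2*lam*m - 3*b)^2 = 4*lam*L*m^2 - 12*L*b*m + 9*(L/lam)*b^2"
      using lam by (simp add: field_simps power2_eq_square)
    ultimately show ?thesis by linarith
  qed
  have s4b: "18*(L/lam)*b^2 \<le> 9/4*b^2"
  proof -
    have "L/lam \<le> 1/8" using Ll lam by (simp add: field_simps)
    then have "18*(L/lam) \<le> 9/4" by linarith
    then show ?thesis by (rule mult_right_mono) simp
  qed
  have "-24*k2 \<le> 24*L*(a*b) + 24*L*b*m" using k2 by (simp add: algebra_simps)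
  then have s4: "-24*k2 \<le> 24*L*(a*b) + 8*lam*L*m^2 + 9/4*b^2"
    using s4a s4b by linarith
  have s5: "24*L*(a*b) \<le> 3*lam*(a*b)" 
  proof -
    have "24*L \<le> 3*lam" using Ll by linarith
    then show ?thesis by (rule mult_right_mono) (simp add: a b)
  qed
  have s5b: "18*L*a^2 \<le> 9/4*lam*a^2" 
  proof -
    have "18*L \<le> 9/4*lam" using Ll by linarith
    then show ?thesis by (rule mult_right_mono) simp
  qed
  have s6: "lam*p \<le> lam*(a*b)" using mult_left_mono[OF p] lam by simp
  have s7: "5*lam*(a*b) \<le> 15/4*b^2 + 5/3*lam*lam*a^2"
  proof -
    have "0 \<le> 15/4*(b - 2/3*lam*a)^2" by simp
    then show ?thesis by (simp add: algebra_simps power2_eq_square)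
  qed
  have s9: "g*b^2 \<le> 1/2*b^2" using gh by (rule mult_right_mono) simp
  have s10: "g*lam*a^2 \<ge> 0" using gl0 by simp
  have s11: "g*g*a^2 \<ge> 0" by simp
  have s12: "lam*lam*a^2 \<ge> 0" by simp
  have "lam*a^2 = (2*g*(lam+1))*a^2" using arg_cong[where f="\<lambda>t. t*a^2", OF gid] .
  then have gida: "lam*a^2 = 2*g*lam*a^2 + 2*g*a^2" by (simp add: algebra_simps)
  show ?thesis
    unfolding EG using ELH EgH s1 s2 s3 s4 s5 s5b s6 s7 s9 s10 s11 s12 gida
    by linarith
qed

lemma grad_has_derivative:
  fixes f :: "'a::euclidean_space \<Rightarrow> real"
  assumes "f differentiable (at x)"
  shows "(f has_derivative (\<lambda>h. grad f x \<bullet> h)) (at x)"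
proof -
  let ?D = "frechet_derivative f (at x)"
  have hD: "(f has_derivative ?D) (at x)" using assms frechet_derivative_works by blast
  have lin: "linear ?D" using has_derivative_linear[OF hD] .
  have "?D = (\<lambda>h. grad f x \<bullet> h)"
  proof
    fix h
    have "?D h = ?D h \<bullet> 1" by simp
    also have "\<dots> = (\<Sum>i\<in>Basis. (h\<bullet>i) * (?D i \<bullet> 1))" by (rule Linear_Algebra.linear_componentwise[OF lin])
    also have "\<dots> = (\<Sum>i\<in>Basis. ?D i * (i \<bullet> h))"
      by (rule sum.cong) (simp_all add: inner_commute mult.commute)
    also have "\<dots> = grad f x \<bullet> h"
      unfolding grad_def by (simp add: inner_sum_left)
    finally show "?D h = grad f x \<bullet> h" .
  qed
  then show ?thesis using hD by simp
qed

lemma grad_eq: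
  fixes f :: "'a::euclidean_space \<Rightarrow> real"
  assumes "(f has_derivative (\<lambda>h. g \<bullet> h)) (at x)"
  shows "grad f x = g"
proof -
  have "frechet_derivative f (at x) = (\<lambda>h. g \<bullet> h)" using frechet_derivative_at[OF assms] by simp
  moreover have "(\<Sum>i\<in>Basis. (g \<bullet> i) *\<^sub>R i) = g" by (rule euclidean_representation)
  ultimately show ?thesis unfolding grad_def by (metis (no_types, lifting) inner_commute sum.cong)
qed

lemma Hfun_x:
  fixes U :: "'a::euclidean_space \<Rightarrow> real"
  assumes "U differentiable (at x)"
  shows "grad_x (Hfun U lam) x v = 24 *\<^sub>R grad U x + (2*(6 * (1 - gam lam) + lam)) *\<^sub>R x + 12 *\<^sub>R v"
proof -
  let ?c = "6 * (1 - gam lam) + lam"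
  have e: "(\<lambda>y. Hfun U lam y v) = (\<lambda>y. 24 * U y + ?c * (y \<bullet> y) + 12 * (y \<bullet> v) + 12 * (v \<bullet> v))"
    unfolding Hfun_def by (simp add: power2_norm_eq_inner)
  have "((\<lambda>y. Hfun U lam y v) has_derivative
     (\<lambda>h. (24 *\<^sub>R grad U x + (2*?c) *\<^sub>R x + 12 *\<^sub>R v) \<bullet> h)) (at x)"
    unfolding e
    apply (rule derivative_eq_intros grad_has_derivative[OF assms] | simp)+
    apply (simp add: algebra_simps inner_add_left inner_commute)
    done
  then show ?thesis unfolding grad_x_def by (rule grad_eq)
qed

lemma Hfun_v:
  fixes U :: "'a::euclidean_space \<Rightarrow> real"
  shows "grad_v (Hfun U lam) x v = 12 *\<^sub>R x + 24 *\<^sub>R v"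
proof -
  have "((\<lambda>w. Hfun U lam x w) has_derivative (\<lambda>h. (12 *\<^sub>R x + 24 *\<^sub>R v) \<bullet> h)) (at v)"
    unfolding Hfun_def power2_norm_eq_inner
    apply (rule derivative_eq_intros | simp)+
    apply (simp add: algebra_simps inner_add_left inner_commute)
    done
  then show ?thesis unfolding grad_v_def by (rule grad_eq)
qed

lemma Hfun_lap:
  fixes U :: "'a::euclidean_space \<Rightarrow> real"
  shows "lap_v (Hfun U lam) x v = 24 * DIM('a)"
proof -
  have d1: "frechet_derivative (\<lambda>u. Hfun U lam x u) (at w) = (\<lambda>h. (12 *\<^sub>R x + 24 *\<^sub>R w) \<bullet> h)" for w
  proof -
    have "((\<lambda>u. Hfun U lam x u) has_derivative (\<lambda>h. (12 *\<^sub>R x + 24 *\<^sub>R w) \<bullet> h)) (at w)"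
      unfolding Hfun_def power2_norm_eq_inner
      apply (rule derivative_eq_intros | simp)+
      apply (simp add: algebra_simps inner_add_left inner_commute)
      done
    then show ?thesis by (rule frechet_derivative_at[symmetric])
  qed
  have d2: "frechet_derivative (\<lambda>w. (12 *\<^sub>R x + 24 *\<^sub>R w) \<bullet> i) (at v) i = 24" if "i \<in> Basis" for i
  proof -
    have "((\<lambda>w. (12 *\<^sub>R x + 24 *\<^sub>R w) \<bullet> i) has_derivative (\<lambda>h. 24 * (h \<bullet> i))) (at v)"
      apply (rule derivative_eq_intros | simp)+
      done
    then have "frechet_derivative (\<lambda>w. (12 *\<^sub>R x + 24 *\<^sub>R w) \<bullet> i) (at v) = (\<lambda>h. 24 * (h \<bullet> i))"
      by (rule frechet_derivative_at[symmetric])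
    then show ?thesis using that by simp
  qed
  show ?thesis unfolding lap_v_def d1 using d2 by simp
qed

lemma grad_odd:
  fixes W :: "'a::euclidean_space \<Rightarrow> real"
  assumes W_diff: "\<And>x. W differentiable (at x)" and W_even: "\<And>x. W (- x) = W x"
  shows "grad W x = - grad W (- x)"
proof -
  have "((\<lambda>y. W (- y)) has_derivative (\<lambda>h. grad W (- x) \<bullet> (- h))) (at x)"
    by (rule has_derivative_compose[OF has_derivative_minus[OF has_derivative_ident] grad_has_derivative[OF W_diff]])
  then have "(W has_derivative (\<lambda>h. (- grad W (- x)) \<bullet> h)) (at x)"
    using W_even by simp
  then show ?thesis by (rule grad_eq)
qed

lemma grad_lin_bound:
  fixes W :: "'a::euclidean_space \<Rightarrow> real"
  assumes W_diff: "\<And>x. W differentiable (at x)" and W_even: "\<And>x. W (- x) = W x"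
    and A3: "\<And>x y. norm (grad W x - grad W y) \<le> L_W * norm (x - y)"
  shows "norm (grad W z) \<le> L_W * norm z"
proof -
  have "grad W 0 = - grad W 0" using grad_odd[OF W_diff W_even, of 0] by simp
  then have "grad W 0 + grad W 0 = 0" by (metis right_minus)
  then have "(2::real) *\<^sub>R grad W 0 = 0" by (simp add: scaleR_2)
  then have "grad W 0 = 0" by simp
  then show ?thesis using A3[of z 0] by simp
qed

lemma LW_nonneg:
  fixes W :: "'a::euclidean_space \<Rightarrow> real"
  assumes A3: "\<And>x y. norm (grad W x - grad W y) \<le> L_W * norm (x - y)"
  shows "L_W \<ge> 0"
proof -
  obtain e :: 'a where e: "e \<in> Basis" using nonempty_Basis by blast
  have "0 \<le> L_W * norm (e - 0)" using A3[of e 0] norm_ge_zero order_trans by blast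
  then show ?thesis using e by simp
qed

lemma conv_bound:
  fixes W :: "'a::euclidean_space \<Rightarrow> real"
  assumes W_diff: "\<And>x. W differentiable (at x)" and W_even: "\<And>x. W (- x) = W x"
    and W_C1: "continuous_on UNIV (grad W)"
    and A3: "\<And>x y. norm (grad W x - grad W y) \<le> L_W * norm (x - y)"
    and P: "prob_space \<mu>" and S: "sets \<mu> = sets borel" and I: "integrable \<mu> norm"
  shows "norm (conv_grad W \<mu> x) \<le> L_W * (norm x + (\<integral>y. norm y \<partial>\<mu>))"
proof -
  interpret prob_space \<mu> by (rule P)
  have L0: "L_W \<ge> 0" by (rule LW_nonneg[OF A3])
  have mb: "(\<lambda>y. grad W (x - y)) \<in> borel_measurable borel"
    by (rule borel_measurable_continuous_on[OF W_C1]) simp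
  have m: "(\<lambda>y. norm (grad W (x - y))) \<in> borel_measurable \<mu>"
  proof -
    have "(\<lambda>y. grad W (x - y)) \<in> borel_measurable \<mu>" using mb by (simp add: measurable_cong_sets[OF S refl])
    then show ?thesis by measurable
  qed
  have If: "integrable \<mu> (\<lambda>y. L_W * (norm x + norm y))"
    using I by simp
  have bnd: "norm (grad W (x - y)) \<le> L_W * (norm x + norm y)" for y
  proof -
    have "norm (grad W (x - y)) \<le> L_W * norm (x - y)" by (rule grad_lin_bound[OF W_diff W_even A3])
    also have "\<dots> \<le> L_W * (norm x + norm y)" using L0 norm_triangle_ineq4 by (intro mult_left_mono) auto
    finally show ?thesis .
  qed
  have Ig: "integrable \<mu> (\<lambda>y. norm (grad W (x - y)))"
    by (rule Bochner_Integration.integrable_bound[OF If m]) (auto intro!: AE_I2 order_trans[OF _ abs_ge_self] bnd)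
  have "norm (conv_grad W \<mu> x) \<le> (\<integral>y. norm (grad W (x - y)) \<partial>\<mu>)"
    unfolding conv_grad_def by (rule integral_norm_bound)
  also have "\<dots> \<le> (\<integral>y. L_W * (norm x + norm y) \<partial>\<mu>)"
    by (rule integral_mono[OF Ig If bnd])
  also have "\<dots> = L_W * (norm x + (\<integral>y. norm y \<partial>\<mu>))"
    using I by (simp add: prob_space)
  finally show ?thesis .
qed


theorem lemma2p1:
  fixes U W :: "'a::euclidean_space \<Rightarrow> real"
    and lam A At L_U L_W :: real
  assumes U_diff: "\<And>x. U differentiable (at x)"
    and U_C1: "continuous_on UNIV (grad U)"
    and W_diff: "\<And>x. W differentiable (at x)"
    and W_C1: "continuous_on UNIV (grad W)"
    and lam_pos: "lam > 0" and A_nonneg: "A \<ge> 0"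
    and U_nonneg: "\<And>x. U x \<ge> 0"
    and A1: "\<And>x. (1/2) * (grad U x \<bullet> x) \<ge> lam * (U x + (norm x)\<^sup>2 / 4) - A"
    and A2: "\<And>x y. norm (grad U x - grad U y) \<le> L_U * norm (x - y)"
    and W_even: "\<And>x. W (- x) = W x"
    and A3: "\<And>x y. norm (grad W x - grad W y) \<le> L_W * norm (x - y)"
    and LW_small: "L_W < lam / 8"
    and At_nonneg: "At \<ge> 0"
    and At_bound: "\<And>x. U x \<ge> lam / 6 * (norm x)\<^sup>2 - At"
  shows "(\<forall>(\<mu>::'a measure) x v. prob_space \<mu> \<and> sets \<mu> = sets borel \<and> integrable \<mu> norm \<longrightarrow>
            Hfun U lam x v \<ge> 24 * U x + lam * (norm x)\<^sup>2 + 12 * (norm (v + x /\<^sub>R 2))\<^sup>2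
          \<and> Lgen U W \<mu> (Hfun U lam) x v \<le> Bconst lam A At DIM('a)
              + L_W * (6 + 8 * lam) * (\<integral>y. norm y \<partial>\<mu>)\<^sup>2
              - (3/4 * lam + lam\<^sup>2) * (norm x)\<^sup>2 - gam lam * Hfun U lam x v
          \<and> Lgen U W \<mu> (Hfun U lam) x v \<le> Bconst lam A At DIM('a)
              + ((\<integral>y. norm y \<partial>\<mu>)\<^sup>2 - (norm x)\<^sup>2) * (3/4 * lam + lam\<^sup>2)
              - gam lam * Hfun U lam x v)
    \<and> (\<forall>x v. Hfun U lam x v \<ge> 0)
    \<and> filterlim (\<lambda>(x, v). Hfun U lam x v) at_top at_infinity"
proof -
  have L0: "L_W \<ge> 0" by (rule LW_nonneg[OF A3])
  define g where "g = gam lam"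
  have gdef: "g = lam/(2*(lam+1))" unfolding g_def gam_def ..
  have g0: "g \<ge> 0" using gdef lam_pos by simp
  have gid: "lam = 2*g*(lam+1)" using gdef lam_pos by (simp add: field_simps)
  have "lam*(1-2*g) = 2*g" using gid by (simp add: algebra_simps)
  then have "lam*(1-2*g) \<ge> 0" using g0 by simp
  then have gh: "g \<le> 1/2" using lam_pos by (simp add: zero_le_mult_iff)
  have Hdef: "Hfun U lam x v = 24*U x + (6*(1-g)+lam)*(norm x)^2 + 12*(x \<bullet> v) + 12*(norm v)^2"
    for x v unfolding Hfun_def g_def ..
  have lowH: "Hfun U lam x v \<ge> 24 * U x + lam * (norm x)\<^sup>2 + 12 * (norm (v + x /\<^sub>R 2))\<^sup>2" for x v
  proof -
    have e: "(norm (v + x /\<^sub>R 2))^2 = (norm v)^2 + x \<bullet> v + (norm x)^2/4"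
      by (simp add: power2_norm_eq_inner inner_add_left inner_add_right inner_commute algebra_simps)
    have "0 \<le> (3-6*g)*(norm x)^2" using gh by simp
    then show ?thesis unfolding Hdef e by (rule aux1)
  qed
  have Hnn: "Hfun U lam x v \<ge> 0" for x v
  proof -
    have "0 \<le> 24 * U x + lam * (norm x)\<^sup>2 + 12 * (norm (v + x /\<^sub>R 2))\<^sup>2"
      using U_nonneg[of x] lam_pos by simp
    then show ?thesis using lowH[of x v] by linarith
  qed
  define kap where "kap = min (2*lam/3) 6"
  have kap0: "kap > 0" unfolding kap_def using lam_pos by simp
  have Hkap: "Hfun U lam x v \<ge> kap * (norm (x, v))^2" for x v
  proof -
    let ?w = "v + x /\<^sub>R 2"
    have nv: "norm v \<le> norm ?w + norm x / 2"
      using norm_triangle_ineq4[of ?w "x /\<^sub>R 2"] by simp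
    have "(norm v)^2 \<le> (norm ?w + norm x / 2)^2" using nv by (simp add: power_mono)
    also have "\<dots> \<le> 2*(norm ?w)^2 + (norm x)^2/2"
    proof -
      have "0 \<le> (norm ?w - norm x / 2)^2" by simp
      then show ?thesis by (simp add: algebra_simps power2_eq_square)
    qed
    finally have v2: "(norm v)^2 \<le> 2*(norm ?w)^2 + (norm x)^2/2" .
    have np: "(norm (x, v))^2 = (norm x)^2 + (norm v)^2" by (simp add: norm_Pair)
    have "kap * (norm (x, v))^2 \<le> kap * (3/2*(norm x)^2 + 2*(norm ?w)^2)"
      unfolding np using v2 kap0 by (intro mult_left_mono) auto
    also have "\<dots> = (kap*(3/2))*(norm x)^2 + (kap*2)*(norm ?w)^2" by (simp add: algebra_simps)
    also have "\<dots> \<le> lam*(norm x)^2 + 12*(norm ?w)^2"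
    proof -
      have "kap*(3/2) \<le> lam" "kap*2 \<le> 12" unfolding kap_def by auto
      then show ?thesis by (intro add_mono mult_right_mono) auto
    qed
    also have "\<dots> \<le> Hfun U lam x v" using lowH[of x v] U_nonneg[of x] by linarith
    finally show ?thesis .
  qed
  have lim: "filterlim (\<lambda>(x, v). Hfun U lam x v) at_top at_infinity"
    unfolding filterlim_at_top eventually_at_infinity
  proof
    fix Z :: real
    show "\<exists>b. \<forall>z. b \<le> norm z \<longrightarrow> Z \<le> (case z of (x, v) \<Rightarrow> Hfun U lam x v)"
    proof (intro exI allI impI)
      fix z :: "'a \<times> 'a"
      assume b: "max 1 (Z / kap) \<le> norm z"
      obtain x v where z: "z = (x, v)" by (cases z)
      have n1: "1 \<le> norm z" "Z / kap \<le> norm z" using b by auto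
      have "Z \<le> kap * norm z" using n1(2) kap0 by (simp add: field_simps)
      also have "\<dots> \<le> kap * (norm z)^2"
      proof -
        have "norm z * 1 \<le> norm z * norm z" using n1(1) by (intro mult_left_mono) auto
        then have "norm z \<le> (norm z)^2" by (simp add: power2_eq_square)
        then show ?thesis using kap0 by (intro mult_left_mono) auto
      qed
      also have "\<dots> \<le> Hfun U lam x v" using Hkap[of x v] z by simp
      finally show "Z \<le> (case z of (x, v) \<Rightarrow> Hfun U lam x v)" using z by simp
    qed
  qed
  have main: "Hfun U lam x v \<ge> 24 * U x + lam * (norm x)\<^sup>2 + 12 * (norm (v + x /\<^sub>R 2))\<^sup>2
          \<and> Lgen U W \<mu> (Hfun U lam) x v \<le> Bconst lam A At DIM('a)
              + L_W * (6 + 8 * lam) * (\<integral>y. norm y \<partial>\<mu>)\<^sup>2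
              - (3/4 * lam + lam\<^sup>2) * (norm x)\<^sup>2 - gam lam * Hfun U lam x v
          \<and> Lgen U W \<mu> (Hfun U lam) x v \<le> Bconst lam A At DIM('a)
              + ((\<integral>y. norm y \<partial>\<mu>)\<^sup>2 - (norm x)\<^sup>2) * (3/4 * lam + lam\<^sup>2)
              - gam lam * Hfun U lam x v"
    if P: "prob_space \<mu>" and S: "sets \<mu> = sets borel" and I: "integrable \<mu> norm"
    for \<mu> :: "'a measure" and x v
  proof -
    define K where "K = conv_grad W \<mu> x"
    define m where "m = (\<integral>y. norm y \<partial>\<mu>)"
    have Kb: "norm K \<le> L_W * (norm x + m)"
      unfolding K_def m_def by (rule conv_bound[OF W_diff W_even W_C1 A3 P S I])
    have m0: "m \<ge> 0" unfolding m_def by (rule Bochner_Integration.integral_nonneg) simp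
    have LHeq: "Lgen U W \<mu> (Hfun U lam) x v = (2*(6*(1-g)+lam)-12)*(x \<bullet> v) - 12*(norm v)^2
        - 12*(grad U x \<bullet> x) - 12*(K \<bullet> x) - 24*(K \<bullet> v) + 24*real DIM('a)"
      unfolding Lgen_def Hfun_x[OF U_diff] Hfun_v Hfun_lap g_def K_def
      by (simp add: inner_add_left inner_add_right inner_diff_left inner_diff_right inner_commute
          algebra_simps power2_norm_eq_inner)
    have k1: "- (K \<bullet> x) \<le> L_W * (norm x + m) * norm x"
    proof -
      have "- (K \<bullet> x) \<le> norm K * norm x" using norm_cauchy_schwarz[of "-K" x] by simp
      also have "\<dots> \<le> L_W * (norm x + m) * norm x" by (rule mult_right_mono[OF Kb]) simp
      finally show ?thesis .
    qed
    have k2: "- (K \<bullet> v) \<le> L_W * (norm x + m) * norm v"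
    proof -
      have "- (K \<bullet> v) \<le> norm K * norm v" using norm_cauchy_schwarz[of "-K" v] by simp
      also have "\<dots> \<le> L_W * (norm x + m) * norm v" by (rule mult_right_mono[OF Kb]) simp
      finally show ?thesis .
    qed
    have p: "x \<bullet> v \<le> norm x * norm v" by (rule norm_cauchy_schwarz)
    have S2: "Lgen U W \<mu> (Hfun U lam) x v \<le> 24*(A + (lam - g)*At + real DIM('a)) + L_W*(6+8*lam)*m^2
        - (3/4*lam+lam^2)*(norm x)^2 - g*Hfun U lam x v"
      by (rule scalar_main[OF lam_pos L0 LW_small gdef norm_ge_zero norm_ge_zero m0 p k1 k2
            A1[of x] At_bound[of x] Hdef LHeq])
    have B: "Bconst lam A At DIM('a) = 24*(A + (lam - g)*At + real DIM('a))"
      unfolding Bconst_def g_def ..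
    have cmp: "L_W*(6+8*lam)*m^2 \<le> (3/4*lam+lam^2)*m^2"
    proof -
      have "L_W*(6+8*lam) \<le> lam/8*(6+8*lam)" using LW_small lam_pos by (intro mult_right_mono) auto
      also have "\<dots> = 3/4*lam+lam^2" by (simp add: algebra_simps power2_eq_square)
      finally show ?thesis by (rule mult_right_mono) simp
    qed
    have eq3: "(m^2 - (norm x)^2) * (3/4*lam+lam^2) = (3/4*lam+lam^2)*m^2 - (3/4*lam+lam^2)*(norm x)^2"
      by (simp add: algebra_simps)
    show ?thesis
      using lowH[of x v] S2 cmp eq3 unfolding B m_def[symmetric] g_def[symmetric] by linarith
  qed
  show ?thesis using main Hnn lim by blast
qed

end
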